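(* $\mathbf\Delta$ is an open subset of $\mathcal P(\mathcal H)\times\mathcal P(\mathcal H)$ (for the operator norm topology); in particular $\mathbf\Delta$ is a submanifold of $\mathcal P(\mathcal H)\times\mathcal P(\mathcal H)$.
   Context: $\mathcal H$ is a separable infinite-dimensional complex Hilbert space, $\mathcal B(\mathcal H)$ the bounded operators, $\mathcal P(\mathcal H)=\{P\in\mathcal B(\mathcal H):P=P^2=P^*\}$ with the norm topology (a $C^\infty$ submanifold of $\mathcal B(\mathcal H)$). For a closed subspace $\mathcal S$, $P_{\mathcal S}$ denotes the orthogonal projection onto $\mathcal S$. Two closed subspaces $\mathcal S,\mathcal T$ have a common complement if there is a closed subspace $\mathcal Z$ with $\mathcal S\cap\mathcal Z=\mathcal T\cap\mathcal Z=\{0\}$ and $\mathcal S+\mathcal Z=\mathcal T+\mathcal Z=\mathcal H$. $\mathbf\Delta=\{(P_{\mathcal S},P_{\mathcal T})\in\mathcal P(\mathcal H)\times\mathcal P(\mathcal H):\mathcal S,\mathcal T\text{ have a common complement}\}$. *)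

theory Defs
  imports "HOL-Analysis.Analysis"
begin

class complex_vector = real_vector +
  fixes scaleC :: "complex \<Rightarrow> 'a \<Rightarrow> 'a" (infixr \<open>*\<^sub>C\<close> 75)
  assumes scaleC_add_right: "a *\<^sub>C (x + y) = a *\<^sub>C x + a *\<^sub>C y"
    and scaleC_add_left: "(a + b) *\<^sub>C x = a *\<^sub>C x + b *\<^sub>C x"
    and scaleC_scaleC: "a *\<^sub>C (b *\<^sub>C x) = (a * b) *\<^sub>C x"
    and scaleC_one: "1 *\<^sub>C x = x"
    and scaleC_of_real: "(complex_of_real r) *\<^sub>C x = r *\<^sub>R x"

class complex_inner = complex_vector + real_normed_vector +
  fixes cinner :: "'a \<Rightarrow> 'a \<Rightarrow> complex"
  assumes cinner_commute: "cinner x y = cnj (cinner y x)"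
    and cinner_add_left: "cinner (x + y) z = cinner x z + cinner y z"
    and cinner_scaleC_left: "cinner (a *\<^sub>C x) y = cnj a * cinner x y"
    and cinner_norm: "cinner x x = complex_of_real ((norm x)\<^sup>2)"

class chilbert_space = complex_inner + complete_space

definition cspan :: "'a::complex_vector set \<Rightarrow> 'a set" where
  "cspan S = {(\<Sum>s\<in>F. c s *\<^sub>C s) | F c. finite F \<and> F \<subseteq> S}"

definition separable_space :: "'a::topological_space itself \<Rightarrow> bool" where
  "separable_space _ \<longleftrightarrow> (\<exists>D::'a set. countable D \<and> closure D = UNIV)"

definition infinite_dimensional :: "'a::complex_vector itself \<Rightarrow> bool" where
  "infinite_dimensional _ \<longleftrightarrow> \<not> (\<exists>S::'a set. finite S \<and> cspan S = UNIV)"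

definition closed_csubspace :: "'a::{complex_vector,topological_space} set \<Rightarrow> bool" where
  "closed_csubspace Z \<longleftrightarrow> closed Z \<and> 0 \<in> Z \<and> (\<forall>x\<in>Z. \<forall>y\<in>Z. x + y \<in> Z)
     \<and> (\<forall>c. \<forall>x\<in>Z. c *\<^sub>C x \<in> Z)"

text \<open>The set of orthogonal projections in B(H): complex-linear bounded operators P
  with P^2 = P and P^* = P.  Bounded operators are elements of the type of bounded
  (real-)linear maps carrying the operator norm, restricted to complex-linear ones.\<close>
definition orth_projections :: "('a::complex_inner \<Rightarrow>\<^sub>L 'a) set" where
  "orth_projections = {P::'a \<Rightarrow>\<^sub>L 'a. (\<forall>c x. blinfun_apply P (c *\<^sub>C x) = c *\<^sub>C blinfun_apply P x)
      \<and> P o\<^sub>L P = P \<and> (\<forall>x y. cinner (blinfun_apply P x) y = cinner x (blinfun_apply P y))}"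

definition common_complement :: "'a::{complex_vector,topological_space} set \<Rightarrow> 'a set \<Rightarrow> bool" where
  "common_complement S T \<longleftrightarrow> (\<exists>Z. closed_csubspace Z \<and> S \<inter> Z = {0} \<and> T \<inter> Z = {0}
     \<and> {s + z | s z. s \<in> S \<and> z \<in> Z} = UNIV \<and> {t + z | t z. t \<in> T \<and> z \<in> Z} = UNIV)"

text \<open>Delta: pairs (P_S, P_T) of orthogonal projections whose ranges S, T have a common
  complement (the range of an orthogonal projection P_S is S).\<close>
definition Delta :: "(('a::complex_inner \<Rightarrow>\<^sub>L 'a) \<times> ('a \<Rightarrow>\<^sub>L 'a)) set" where
  "Delta = {(P, Q). P \<in> orth_projections \<and> Q \<in> orth_projections
      \<and> common_complement (range (blinfun_apply P)) (range (blinfun_apply Q))}"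

end

theory Submission
  imports Defs
begin

instance chilbert_space \<subseteq> banach ..

locale decomp =
  fixes S Z :: "'a::banach set"
  assumes clS: "closed S" and subS: "subspace S" and clZ: "closed Z" and subZ: "subspace Z"
    and inter: "S \<inter> Z = {0}" and sumSZ: "\<forall>x. \<exists>s\<in>S. x - s \<in> Z"
begin

definition E where "E x = (SOME s. s \<in> S \<and> x - s \<in> Z)"

lemma E: "E x \<in> S" "x - E x \<in> Z"
proof -
  have "\<exists>s. s \<in> S \<and> x - s \<in> Z" using sumSZ by blast
  then have "E x \<in> S \<and> x - E x \<in> Z" unfolding E_def by (rule someI_ex)
  then show "E x \<in> S" "x - E x \<in> Z" by auto
qed

lemma E_uniq: assumes "s \<in> S" "x - s \<in> Z" shows "E x = s"
proof -
  have a: "s - E x \<in> S" using subspace_diff[OF subS assms(1) E(1)] .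
  have "(x - E x) - (x - s) \<in> Z" using subspace_diff[OF subZ E(2) assms(2)] .
  then have "s - E x \<in> Z" by (simp add: algebra_simps)
  with a inter have "s - E x = 0" by blast
  then show ?thesis by simp
qed

lemma E_diff: "E (x - y) = E x - E y"
proof (rule E_uniq)
  show "E x - E y \<in> S" using subspace_diff[OF subS E(1) E(1)] .
  have "(x - E x) - (y - E y) \<in> Z" using subspace_diff[OF subZ E(2) E(2)] .
  then show "x - y - (E x - E y) \<in> Z" by (simp add: algebra_simps)
qed

lemma E_scale: "E (c *\<^sub>R x) = c *\<^sub>R E x"
proof (rule E_uniq)
  show "c *\<^sub>R E x \<in> S" using subspace_scale[OF subS E(1)] by simp
  have "c *\<^sub>R (x - E x) \<in> Z" using subspace_scale[OF subZ E(2)] by simp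
  then show "c *\<^sub>R x - c *\<^sub>R E x \<in> Z" by (simp add: algebra_simps)
qed

lemma E_zero: "E 0 = 0"
  using E_scale[of 0 0] by simp

lemma E_baire: "\<exists>n r. r > 0 \<and> (\<exists>x0. ball x0 r \<subseteq> closure {x. norm (E x) \<le> real n})"
proof (rule ccontr)
  assume H: "\<not> ?thesis"
  define K where "K = (\<lambda>n::nat. closure {x. norm (E x) \<le> real n})"
  have "euclidean interior_of \<Union>(range K) = {}"
  proof (rule Baire_category_alt)
    show "completely_metrizable_space (euclidean :: 'a topology) \<or> locally_compact_space (euclidean :: 'a topology) \<and> regular_space (euclidean :: 'a topology)"
      by (rule disjI1, rule completely_metrizable_space_euclidean)
    show "countable (range K)" by (rule countable_image) simp
    fix T assume "T \<in> range K"
    then obtain n where T: "T = K n" by (rule rangeE)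
    show "closedin euclidean T \<and> euclidean interior_of T = {}"
    proof
      show "closedin euclidean T" unfolding T K_def by simp
      show "euclidean interior_of T = {}"
      proof (rule ccontr)
        assume "euclidean interior_of T \<noteq> {}"
        then obtain x0 where x0: "x0 \<in> interior T" by auto
        obtain r where r: "r > 0" "ball x0 r \<subseteq> interior T"
          using open_contains_ball[of "interior T"] x0 open_interior by blast
        have "ball x0 r \<subseteq> K n" using r(2) interior_subset T by blast
        then have "\<exists>n r. r > 0 \<and> (\<exists>x0. ball x0 r \<subseteq> closure {x. norm (E x) \<le> real n})"
          using r(1) unfolding K_def by blast
        then show False using H by blast
      qed
    qed
  qed
  moreover have "\<Union>(range K) = UNIV"
  proof -
    have "x \<in> K (nat \<lceil>norm (E x)\<rceil>)" for x
    proof -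
      have "norm (E x) \<le> real (nat \<lceil>norm (E x)\<rceil>)" by (rule real_nat_ceiling_ge)
      then show ?thesis unfolding K_def by (intro subsetD[OF closure_subset]) simp
    qed
    then show ?thesis by blast
  qed
  ultimately have "euclidean interior_of (UNIV::'a set) = {}" by (simp only:)
  then have "(UNIV::'a set) = {}" by (simp only: euclidean_interior_of interior_UNIV)
  then show False by simp
qed

lemma E_approx: "\<exists>M\<ge>0. \<forall>y. \<exists>a. norm (E a) \<le> M * norm y \<and> norm (y - a) \<le> norm y / 2"
proof -
  obtain n r x0 where r: "r > 0" and B: "ball x0 r \<subseteq> closure {x. norm (E x) \<le> real n}"
    using E_baire by blast
  have A: "\<exists>a. norm (E a) \<le> real n \<and> norm (y - a) < e" if y: "norm y < r" and e: "e > 0" for y e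
  proof -
    have "x0 + y \<in> closure {x. norm (E x) \<le> real n}" "x0 - y \<in> closure {x. norm (E x) \<le> real n}"
      using B y by (auto simp: dist_norm)
    then obtain a1 a2 where a1: "norm (E a1) \<le> real n" "dist a1 (x0 + y) < e"
      and a2: "norm (E a2) \<le> real n" "dist a2 (x0 - y) < e"
      using e unfolding closure_approachable by blast
    define a where "a = (1/2) *\<^sub>R (a1 - a2)"
    have "E a = (1/2) *\<^sub>R (E a1 - E a2)" unfolding a_def E_scale E_diff ..
    then have "norm (E a) \<le> (1/2) * (norm (E a1) + norm (E a2))"
      by (simp add: norm_triangle_ineq4)
    also have "\<dots> \<le> real n" using a1 a2 by simp
    finally have 1: "norm (E a) \<le> real n" .
    define w1 where "w1 = x0 + y - a1"
    define w2 where "w2 = x0 - y - a2"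
    have "y - a = (1/2) *\<^sub>R (w1 - w2)"
    proof -
      have h: "(1/2::real) *\<^sub>R y + (1/2) *\<^sub>R y = y" by (simp flip: scaleR_add_left)
      show ?thesis unfolding a_def w1_def w2_def by (simp add: algebra_simps h)
    qed
    then have "norm (y - a) = (1/2) * norm (w1 - w2)" by simp
    also have "\<dots> \<le> (1/2) * (norm w1 + norm w2)"
      using norm_triangle_ineq4[of w1 w2] by simp
    also have "\<dots> < e" using a1(2) a2(2) unfolding w1_def w2_def by (simp add: dist_norm norm_minus_commute)
    finally show ?thesis using 1 by blast
  qed
  define M where "M = 2 * real n / r"
  have M0: "M \<ge> 0" using r by (simp add: M_def)
  have "\<exists>a. norm (E a) \<le> M * norm y \<and> norm (y - a) \<le> norm y / 2" for y
  proof (cases "y = 0")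
    case True then show ?thesis by (intro exI[of _ 0]) (simp add: E_zero)
  next
    case False
    then have ny: "norm y > 0" by simp
    define t where "t = r / (2 * norm y)"
    have t: "t > 0" using ny r by (simp add: t_def)
    have "norm (t *\<^sub>R y) = r / 2" using ny t r by (simp add: t_def)
    then have "norm (t *\<^sub>R y) < r" using r by simp
    then obtain a' where a': "norm (E a') \<le> real n" "norm (t *\<^sub>R y - a') < r / 4"
      using A[of "t *\<^sub>R y" "r/4"] r by auto
    define a where "a = (1/t) *\<^sub>R a'"
    have "norm (E a) = (1/t) * norm (E a')" using t by (simp add: a_def E_scale)
    also have "\<dots> \<le> (1/t) * real n" using a' t by (simp add: divide_right_mono)
    also have "\<dots> = M * norm y" using ny r by (simp add: t_def M_def field_simps)
    finally have 1: "norm (E a) \<le> M * norm y" .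
    have "y - a = (1/t) *\<^sub>R (t *\<^sub>R y - a')" using t by (simp add: a_def algebra_simps)
    then have "norm (y - a) = (1/t) * norm (t *\<^sub>R y - a')" using t by simp
    also have "\<dots> \<le> (1/t) * (r / 4)" using a'(2) t by (intro mult_left_mono less_imp_le) simp_all
    also have "\<dots> = norm y / 2" using ny r by (simp add: t_def field_simps)
    finally show ?thesis using 1 by blast
  qed
  then show ?thesis using M0 by blast
qed

lemma E_bounded: "\<exists>M\<ge>0. \<forall>y. norm (E y) \<le> M * norm y"
proof -
  obtain M where M0: "M \<ge> 0" and ex: "\<forall>y. \<exists>a. norm (E a) \<le> M * norm y \<and> norm (y - a) \<le> norm y / 2"
    using E_approx by blast
  from ex have "\<exists>f. \<forall>y. norm (E (f y)) \<le> M * norm y \<and> norm (y - f y) \<le> norm y / 2"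
    by (rule choice)
  then obtain f where f0: "\<forall>y. norm (E (f y)) \<le> M * norm y \<and> norm (y - f y) \<le> norm y / 2"
    by blast
  have f: "\<And>y. norm (E (f y)) \<le> M * norm y" "\<And>y. norm (y - f y) \<le> norm y / 2"
    using f0 by auto
  have "norm (E y) \<le> (2*M) * norm y" for y
  proof -
    define Y where "Y k = ((\<lambda>u. u - f u) ^^ k) y" for k
    have Y0: "Y 0 = y" by (simp add: Y_def)
    have Ysuc: "Y (Suc k) = Y k - f (Y k)" for k by (simp add: Y_def)
    have Ynorm: "norm (Y k) \<le> norm y * (1/2)^k" for k
    proof (induction k)
      case 0 then show ?case by (simp add: Y0)
    next
      case (Suc k)
      have "norm (Y (Suc k)) \<le> norm (Y k) / 2" unfolding Ysuc by (rule f(2))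
      also have "\<dots> \<le> norm y * (1/2)^k / 2" using Suc by simp
      finally show ?case by simp
    qed
    define a where "a k = f (Y k)" for k
    have psum: "(\<Sum>j<k. a j) = y - Y k" for k
      by (induction k) (simp_all add: Y0 Ysuc a_def)
    have Ea: "norm (E (a k)) \<le> M * norm y * (1/2)^k" for k
    proof -
      have "norm (E (a k)) \<le> M * norm (Y k)" unfolding a_def by (rule f(1))
      also have "\<dots> \<le> M * (norm y * (1/2)^k)" using Ynorm[of k] M0 by (rule mult_left_mono)
      finally show ?thesis by simp
    qed
    have sg: "summable (\<lambda>k. M * norm y * (1/2::real)^k)"
      by (intro summable_mult summable_geometric) simp
    have sn: "summable (\<lambda>k. norm (E (a k)))"
      by (rule summable_comparison_test'[OF sg, of 0]) (use Ea in simp)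
    have sE: "summable (\<lambda>k. E (a k))" by (rule summable_norm_cancel[OF sn])
    define s where "s = suminf (\<lambda>k. E (a k))"
    have lim1: "(\<lambda>n. \<Sum>i<n. E (a i)) \<longlonglongrightarrow> s" unfolding s_def by (rule summable_LIMSEQ[OF sE])
    have sS: "s \<in> S"
    proof (rule closed_sequentially[OF clS _ lim1])
      show "(\<Sum>i<n. E (a i)) \<in> S" for n by (rule subspace_sum[OF subS]) (rule E(1))
    qed
    have Ylim: "Y \<longlonglongrightarrow> 0"
    proof (rule tendsto_norm_zero_cancel, rule tendsto_sandwich[of "\<lambda>_. 0" _ _ "\<lambda>k. norm y * (1/2)^k"])
      show "\<forall>\<^sub>F n in sequentially. 0 \<le> norm (Y n)" by simp
      show "\<forall>\<^sub>F n in sequentially. norm (Y n) \<le> norm y * (1/2)^n" using Ynorm by simp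
      show "(\<lambda>_. 0::real) \<longlonglongrightarrow> 0" by simp
      have "(\<lambda>k. norm y * (1/2::real)^k) \<longlonglongrightarrow> norm y * 0"
        by (intro tendsto_mult tendsto_const LIMSEQ_power_zero) simp
      then show "(\<lambda>k. norm y * (1/2::real)^k) \<longlonglongrightarrow> 0" by simp
    qed
    have lim2: "(\<lambda>n. (\<Sum>i<n. a i - E (a i))) \<longlonglongrightarrow> y - s"
    proof -
      have "(\<lambda>n. (y - Y n) - (\<Sum>i<n. E (a i))) \<longlonglongrightarrow> (y - 0) - s"
        by (intro tendsto_diff tendsto_const Ylim lim1)
      then show ?thesis by (simp add: sum_subtractf psum)
    qed
    have yZ: "y - s \<in> Z"
    proof (rule closed_sequentially[OF clZ _ lim2])
      show "(\<Sum>i<n. a i - E (a i)) \<in> Z" for n by (rule subspace_sum[OF subZ]) (rule E(2))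
    qed
    have Ey: "E y = s" by (rule E_uniq[OF sS yZ])
    have "norm s \<le> (\<Sum>k. norm (E (a k)))" unfolding s_def by (rule summable_norm[OF sn])
    also have "\<dots> \<le> (\<Sum>k. M * norm y * (1/2)^k)" by (rule suminf_le[OF Ea sn sg])
    also have "\<dots> = M * norm y * 2"
      by (subst suminf_mult) (simp_all add: suminf_geometric summable_geometric)
    finally show ?thesis using Ey by simp
  qed
  then show ?thesis using M0 by (intro exI[of _ "2*M"]) auto
qed

lemma S_bound: "\<exists>C>0. \<forall>s\<in>S. \<forall>z\<in>Z. norm s \<le> C * norm (s + z)"
proof -
  obtain M where M: "M \<ge> 0" "\<And>y. norm (E y) \<le> M * norm y" using E_bounded by blast
  have "norm s \<le> (M+1) * norm (s + z)" if "s \<in> S" "z \<in> Z" for s z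
  proof -
    have "E (s + z) = s" by (rule E_uniq) (use that in simp_all)
    then have "norm s \<le> M * norm (s + z)" using M(2)[of "s+z"] by simp
    also have "\<dots> \<le> (M+1) * norm (s + z)" by (simp add: mult_right_mono)
    finally show ?thesis .
  qed
  then show ?thesis using M by (intro exI[of _ "M+1"]) auto
qed

end

lemma perturb:
  fixes P :: "'a::banach \<Rightarrow>\<^sub>L 'a" and Z :: "'a set"
  assumes idem: "\<And>x. blinfun_apply P (blinfun_apply P x) = blinfun_apply P x"
    and clZ: "closed Z" and subZ: "subspace Z"
    and inter: "range (blinfun_apply P) \<inter> Z = {0}"
    and sm: "\<forall>x. \<exists>s\<in>range (blinfun_apply P). x - s \<in> Z"
  shows "\<exists>\<delta>>0. \<forall>P'. (\<forall>x. blinfun_apply P' (blinfun_apply P' x) = blinfun_apply P' x)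
            \<longrightarrow> norm (P' - P) < \<delta>
            \<longrightarrow> range (blinfun_apply P') \<inter> Z = {0} \<and> (\<forall>x. \<exists>s\<in>range (blinfun_apply P'). x - s \<in> Z)"
proof -
  have rP: "range (blinfun_apply P) = {x. blinfun_apply P x = x}"
    using idem by (auto intro: range_eqI[of _ _ "_"] simp: image_iff) (metis)
  have clS: "closed (range (blinfun_apply P))" unfolding rP
    by (intro closed_Collect_eq linear_continuous_on blinfun.bounded_linear_right continuous_on_id)
  have subS: "subspace (range (blinfun_apply P))" unfolding rP
    by (simp add: subspace_def blinfun.zero_right blinfun.add_right blinfun.scaleR_right)
  interpret D: decomp "range (blinfun_apply P)" Z
    by unfold_locales (use clS subS clZ subZ inter sm in auto)
  obtain C where C: "C > 0" "\<And>s z. s \<in> range (blinfun_apply P) \<Longrightarrow> z \<in> Z \<Longrightarrow> norm s \<le> C * norm (s + z)"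
    using D.S_bound by blast
  obtain M where M: "M \<ge> 0" "\<And>y. norm (D.E y) \<le> M * norm y"
    using D.E_bounded by blast
  define \<delta> where "\<delta> = 1 / (C + M + 2)"
  have \<delta>0: "\<delta> > 0" using C M by (simp add: \<delta>_def)
  have key: "range (blinfun_apply P') \<inter> Z = {0} \<and> (\<forall>x. \<exists>s\<in>range (blinfun_apply P'). x - s \<in> Z)"
    if idem': "\<forall>x. blinfun_apply P' (blinfun_apply P' x) = blinfun_apply P' x"
      and small: "norm (P' - P) < \<delta>" for P'
  proof -
    define d where "d = norm (P' - P)"
    have d0: "d \<ge> 0" by (simp add: d_def)
    have dC: "(C + 1) * d < 1"
    proof -
      have "(C + 1) * d \<le> (C + 1) * \<delta>" using small C by (intro mult_left_mono) (simp_all add: d_def)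
      also have "\<dots> < 1" using C M by (simp add: \<delta>_def field_simps)
      finally show ?thesis .
    qed
    have dM: "d * M < 1"
    proof -
      have "d * M \<le> \<delta> * M" using small M by (intro mult_right_mono) (simp_all add: d_def)
      also have "\<dots> < 1" using C M by (simp add: \<delta>_def field_simps)
      finally show ?thesis .
    qed
    have nd: "norm (blinfun_apply (P' - P) v) \<le> d * norm v" for v
      unfolding d_def by (rule norm_blinfun)
    have diff: "blinfun_apply (P' - P) v = blinfun_apply P' v - blinfun_apply P v" for v
      by (simp add: blinfun.diff_left)
    have part1: "range (blinfun_apply P') \<inter> Z = {0}"
    proof
      show "{0} \<subseteq> range (blinfun_apply P') \<inter> Z"
        using subspace_0[OF subZ] by (auto intro: range_eqI[of _ _ 0] simp: blinfun.zero_right)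
      show "range (blinfun_apply P') \<inter> Z \<subseteq> {0}"
      proof
        fix x assume "x \<in> range (blinfun_apply P') \<inter> Z"
        then obtain w where xw: "x = blinfun_apply P' w" and xZ: "x \<in> Z" by auto
        have Px: "blinfun_apply P' x = x" using idem' xw by simp
        have mz: "- x \<in> Z" using subspace_neg[OF subZ xZ] .
        have "norm (blinfun_apply P x) \<le> C * norm (blinfun_apply P x + - x)"
          by (rule C(2)[OF _ mz]) simp
        also have "blinfun_apply P x + - x = - blinfun_apply (P' - P) x"
          using Px by (simp add: diff)
        finally have 1: "norm (blinfun_apply P x) \<le> C * (d * norm x)"
          using nd[of x] C(1) by (simp add: order_trans mult_left_mono)
        have "norm x = norm (blinfun_apply P x + blinfun_apply (P' - P) x)"
          using Px by (simp add: diff)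
        also have "\<dots> \<le> norm (blinfun_apply P x) + norm (blinfun_apply (P' - P) x)"
          by (rule norm_triangle_ineq)
        also have "\<dots> \<le> C * (d * norm x) + d * norm x" using 1 nd[of x] by simp
        also have "\<dots> = ((C + 1) * d) * norm x" by (simp add: algebra_simps)
        finally have "norm x \<le> ((C + 1) * d) * norm x" .
        then have "norm x = 0"
          using dC by (metis mult_le_cancel_right1 norm_ge_zero not_less order_antisym)
        then show "x \<in> {0}" by simp
      qed
    qed
    have part2: "\<exists>s\<in>range (blinfun_apply P'). x - s \<in> Z" for x
    proof -
      define g where "g y = x - blinfun_apply (P' - P) (D.E y)" for y
      have lip: "\<forall>y1 y2. dist (g y1) (g y2) \<le> (d * M) * dist y1 y2"
      proof (intro allI)
        fix y1 y2
        have "g y2 - g y1 = blinfun_apply (P' - P) (D.E y1 - D.E y2)"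
          by (simp add: g_def blinfun.diff_right)
        also have "\<dots> = blinfun_apply (P' - P) (D.E (y1 - y2))" by (simp add: D.E_diff)
        finally have "dist (g y1) (g y2) = norm (blinfun_apply (P' - P) (D.E (y1 - y2)))"
          by (metis dist_commute dist_norm)
        also have "\<dots> \<le> d * norm (D.E (y1 - y2))" by (rule nd)
        also have "\<dots> \<le> d * (M * norm (y1 - y2))" using M(2) d0 by (rule mult_left_mono)
        finally show "dist (g y1) (g y2) \<le> (d * M) * dist y1 y2" by (simp add: dist_norm mult.assoc)
      qed
      obtain y where y: "g y = y"
        using banach_fix_type[OF _ dM lip] d0 M(1) by auto
      have ES: "D.E y \<in> range (blinfun_apply P)" by (rule D.E(1))
      then have PE: "blinfun_apply P (D.E y) = D.E y" using rP by auto
      have "x - blinfun_apply P' (D.E y) = y - D.E y"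
        using y PE by (simp add: g_def diff algebra_simps)
      then have "x - blinfun_apply P' (D.E y) \<in> Z" using D.E(2) by simp
      then show ?thesis by blast
    qed
    show ?thesis using part1 part2 by blast
  qed
  show ?thesis using \<delta>0 key by blast
qed

lemma csub_sub:
  fixes Z :: "'a::{complex_vector,topological_space} set"
  assumes "closed_csubspace Z"
  shows "closed Z" "subspace Z"
proof -
  show "closed Z" using assms by (simp add: closed_csubspace_def)
  have "c *\<^sub>R x \<in> Z" if "x \<in> Z" for c x
  proof -
    have "complex_of_real c *\<^sub>C x \<in> Z" using assms that by (simp add: closed_csubspace_def)
    then show ?thesis by (simp add: scaleC_of_real)
  qed
  then show "subspace Z" using assms by (auto simp: subspace_def closed_csubspace_def)
qed

lemma sumeq:
  fixes S Z :: "'b::ab_group_add set"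
  shows "{s + z | s z. s \<in> S \<and> z \<in> Z} = UNIV \<longleftrightarrow> (\<forall>x. \<exists>s\<in>S. x - s \<in> Z)"
proof
  assume h: "{s + z | s z. s \<in> S \<and> z \<in> Z} = UNIV"
  show "\<forall>x. \<exists>s\<in>S. x - s \<in> Z"
  proof
    fix x
    have "x \<in> {s + z | s z. s \<in> S \<and> z \<in> Z}" using h by simp
    then obtain s z where "x = s + z" "s \<in> S" "z \<in> Z" by blast
    then show "\<exists>s\<in>S. x - s \<in> Z" by (intro bexI[of _ s]) simp_all
  qed
next
  assume h: "\<forall>x. \<exists>s\<in>S. x - s \<in> Z"
  show "{s + z | s z. s \<in> S \<and> z \<in> Z} = UNIV"
  proof (intro set_eqI iffI)
    fix x
    obtain s where "s \<in> S" "x - s \<in> Z" using h by blast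
    then show "x \<in> {s + z | s z. s \<in> S \<and> z \<in> Z}"
      by (intro CollectI exI[of _ s] exI[of _ "x - s"]) simp
  qed simp
qed

lemma orth_idem:
  assumes "P \<in> orth_projections"
  shows "\<forall>x. blinfun_apply P (blinfun_apply P x) = blinfun_apply P x"
proof
  fix x
  have "P o\<^sub>L P = P" using assms by (simp add: orth_projections_def)
  then have "blinfun_apply (P o\<^sub>L P) x = blinfun_apply P x" by simp
  then show "blinfun_apply P (blinfun_apply P x) = blinfun_apply P x" by simp
qed

theorem mainTheorem3:
  assumes "separable_space TYPE('a::chilbert_space)"
    and "infinite_dimensional TYPE('a)"
  shows "openin (top_of_set (orth_projections \<times> orth_projections))
           (Delta :: (('a \<Rightarrow>\<^sub>L 'a) \<times> ('a \<Rightarrow>\<^sub>L 'a)) set)"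
  unfolding openin_euclidean_subtopology_iff
proof (intro conjI ballI)
  show "(Delta :: (('a \<Rightarrow>\<^sub>L 'a) \<times> ('a \<Rightarrow>\<^sub>L 'a)) set) \<subseteq> orth_projections \<times> orth_projections"
    by (auto simp: Delta_def)
  fix pq :: "('a \<Rightarrow>\<^sub>L 'a) \<times> ('a \<Rightarrow>\<^sub>L 'a)"
  assume "pq \<in> Delta"
  then obtain P Q where pq: "pq = (P, Q)" and P: "P \<in> orth_projections" and Q: "Q \<in> orth_projections"
    and cc: "common_complement (range (blinfun_apply P)) (range (blinfun_apply Q))"
    by (auto simp: Delta_def)
  from cc obtain Z where Z: "closed_csubspace Z" "range (blinfun_apply P) \<inter> Z = {0}"
      "range (blinfun_apply Q) \<inter> Z = {0}"
      "{s + z | s z. s \<in> range (blinfun_apply P) \<and> z \<in> Z} = UNIV"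
      "{t + z | t z. t \<in> range (blinfun_apply Q) \<and> z \<in> Z} = UNIV"
    unfolding common_complement_def by blast
  obtain d1 where d1: "d1 > 0" "\<And>P'. \<forall>x. blinfun_apply P' (blinfun_apply P' x) = blinfun_apply P' x
            \<Longrightarrow> norm (P' - P) < d1
            \<Longrightarrow> range (blinfun_apply P') \<inter> Z = {0} \<and> (\<forall>x. \<exists>s\<in>range (blinfun_apply P'). x - s \<in> Z)"
    using perturb[of P Z] orth_idem[OF P] csub_sub[OF Z(1)] Z(2) Z(4) unfolding sumeq by blast
  obtain d2 where d2: "d2 > 0" "\<And>P'. \<forall>x. blinfun_apply P' (blinfun_apply P' x) = blinfun_apply P' x
            \<Longrightarrow> norm (P' - Q) < d2
            \<Longrightarrow> range (blinfun_apply P') \<inter> Z = {0} \<and> (\<forall>x. \<exists>s\<in>range (blinfun_apply P'). x - s \<in> Z)"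
    using perturb[of Q Z] orth_idem[OF Q] csub_sub[OF Z(1)] Z(3) Z(5) unfolding sumeq by blast
  show "\<exists>e>0. \<forall>x'\<in>orth_projections \<times> orth_projections. dist x' pq < e \<longrightarrow> x' \<in> Delta"
  proof (intro exI[of _ "min d1 d2"] conjI ballI impI)
    show "min d1 d2 > 0" using d1 d2 by simp
    fix x' :: "('a \<Rightarrow>\<^sub>L 'a) \<times> ('a \<Rightarrow>\<^sub>L 'a)"
    assume x': "x' \<in> orth_projections \<times> orth_projections" and dx: "dist x' pq < min d1 d2"
    obtain P' Q' where x'eq: "x' = (P', Q')" by (cases x')
    have P': "P' \<in> orth_projections" and Q': "Q' \<in> orth_projections" using x' x'eq by auto
    have "dist P' P \<le> dist x' pq" using dist_fst_le[of x' pq] x'eq pq by simp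
    then have nP: "norm (P' - P) < d1" using dx by (simp add: dist_norm)
    have "dist Q' Q \<le> dist x' pq" using dist_snd_le[of x' pq] x'eq pq by simp
    then have nQ: "norm (Q' - Q) < d2" using dx by (simp add: dist_norm)
    have A: "range (blinfun_apply P') \<inter> Z = {0} \<and> (\<forall>x. \<exists>s\<in>range (blinfun_apply P'). x - s \<in> Z)"
      using d1(2)[OF orth_idem[OF P'] nP] .
    have B: "range (blinfun_apply Q') \<inter> Z = {0} \<and> (\<forall>x. \<exists>s\<in>range (blinfun_apply Q'). x - s \<in> Z)"
      using d2(2)[OF orth_idem[OF Q'] nQ] .
    have "common_complement (range (blinfun_apply P')) (range (blinfun_apply Q'))"
      unfolding common_complement_def
      using Z(1) A B unfolding sumeq by blast
    then show "x' \<in> Delta" using P' Q' x'eq by (simp add: Delta_def)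
  qed
qed

end
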